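(* There is an infinite family of instances (temporal graphs $\mathcal G_n$ with parameters $T_{\max},\delta$) such that the witness complexity under the infection-times-only variation grows in $\Omega(|E(\mathcal G_n)|)$, with the implied constant independent of $k$.
   Context: A temporal graph $\mathcal G=(V,E,\lambda)$ with lifetime $T_{\max}$ consists of a finite undirected static graph $(V,E)$ and a labeling $\lambda:E\to\{1,\dots,T_{\max}\}$; edge $e$ is present only at time $\lambda(e)$. Infection model with parameter $\delta$: a set $S\subseteq V\times[0,T_{\max}]$ of at most $k$ seed infections; a seed $(u,t)$ makes $u$ infected at time $t$; otherwise a susceptible node $u$ becomes infected at time $t$ iff some neighbour $v$ infectious at time $t$ has $\lambda(uv)=t$. A node infected at time $t$ is infectious at times $t+1,\dots,t+\delta$ and resistant afterwards. The infection timetable of a round is the set of pairs $(v,t)$ with $v$ infected at time $t$. Under the infection-times-only variation, a witnessing schedule of length $a$ is a sequence $S_1,\dots,S_a$ of seed sets of size at most $k$ such that all labels of $\mathcal G$ are uniquely determined (among labelings of the known static graph) by the infection timetables of these rounds; the witness complexity is the length of a shortest witnessing schedule. *)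

theory Defs
  imports Complex_Main
begin

definition temporal_graph :: "'v set \<Rightarrow> 'v set set \<Rightarrow> nat \<Rightarrow> ('v set \<Rightarrow> nat) \<Rightarrow> bool" where
  "temporal_graph V E Tmax lam \<longleftrightarrow>
     finite V \<and> (\<forall>e\<in>E. \<exists>u v. e = {u, v} \<and> u \<noteq> v \<and> u \<in> V \<and> v \<in> V) \<and>
     (\<forall>e\<in>E. lam e \<in> {1..Tmax})"

definition labeling :: "'v set set \<Rightarrow> nat \<Rightarrow> ('v set \<Rightarrow> nat) \<Rightarrow> bool" where
  "labeling E Tmax lam \<longleftrightarrow> (\<forall>e\<in>E. lam e \<in> {1..Tmax})"

text \<open>Infection pairs (v,t) with infection time t at most the given bound.
  A node infected at time s is infectious at times s+1..s+delta; a node is infected at most once.\<close>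

primrec infected_upto ::
  "'v set set \<Rightarrow> ('v set \<Rightarrow> nat) \<Rightarrow> nat \<Rightarrow> ('v \<times> nat) set \<Rightarrow> nat \<Rightarrow> ('v \<times> nat) set" where
  "infected_upto E lam \<delta> S 0 = {(u, s). (u, s) \<in> S \<and> s = 0}"
| "infected_upto E lam \<delta> S (Suc t) = infected_upto E lam \<delta> S t \<union>
     {(u, Suc t) | u. u \<notin> fst ` infected_upto E lam \<delta> S t \<and>
        ((u, Suc t) \<in> S \<or>
         (\<exists>v s. (v, s) \<in> infected_upto E lam \<delta> S t \<and> s < Suc t \<and> Suc t \<le> s + \<delta> \<and>
                {u, v} \<in> E \<and> lam {u, v} = Suc t))}"

definition timetable ::
  "'v set set \<Rightarrow> ('v set \<Rightarrow> nat) \<Rightarrow> nat \<Rightarrow> nat \<Rightarrow> ('v \<times> nat) set \<Rightarrow> ('v \<times> nat) set" where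
  "timetable E lam \<delta> Tmax S = infected_upto E lam \<delta> S Tmax"

definition valid_seeds :: "'v set \<Rightarrow> nat \<Rightarrow> nat \<Rightarrow> ('v \<times> nat) set \<Rightarrow> bool" where
  "valid_seeds V Tmax k S \<longleftrightarrow> S \<subseteq> V \<times> {0..Tmax} \<and> finite S \<and> card S \<le> k"

definition witnessing_schedule ::
  "'v set \<Rightarrow> 'v set set \<Rightarrow> nat \<Rightarrow> nat \<Rightarrow> nat \<Rightarrow> ('v set \<Rightarrow> nat) \<Rightarrow> ('v \<times> nat) set list \<Rightarrow> bool" where
  "witnessing_schedule V E Tmax \<delta> k lam Ss \<longleftrightarrow>
     (\<forall>S\<in>set Ss. valid_seeds V Tmax k S) \<and>
     (\<forall>lam'. labeling E Tmax lam' \<longrightarrow>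
        (\<forall>S\<in>set Ss. timetable E lam' \<delta> Tmax S = timetable E lam \<delta> Tmax S) \<longrightarrow>
        (\<forall>e\<in>E. lam' e = lam e))"

definition witness_complexity ::
  "'v set \<Rightarrow> 'v set set \<Rightarrow> nat \<Rightarrow> nat \<Rightarrow> nat \<Rightarrow> ('v set \<Rightarrow> nat) \<Rightarrow> nat" where
  "witness_complexity V E Tmax \<delta> k lam =
     (LEAST a. \<exists>Ss. length Ss = a \<and> witnessing_schedule V E Tmax \<delta> k lam Ss)"

end

theory Submission
  imports Defs
begin

lemma iu_mono: "t \<le> t' \<Longrightarrow> infected_upto E lam d S t \<subseteq> infected_upto E lam d S t'"
  by (induction t' rule: dec_induct) auto

lemma iu_le: "(u,s) \<in> infected_upto E lam d S t \<Longrightarrow> s \<le> t"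
  by (induction t arbitrary: u s) (auto intro: le_SucI)

lemma iu_uniq: "(u,s) \<in> infected_upto E lam d S t \<Longrightarrow> (u,s') \<in> infected_upto E lam d S t \<Longrightarrow> s = s'"
proof (induction t arbitrary: s s')
  case 0 then show ?case by auto
next
  case (Suc t)
  then show ?case using iu_le[of u _ E lam d S t] by (auto simp: image_iff)
qed

lemma iu_origin: "(u,s) \<in> infected_upto E lam d S t \<Longrightarrow> (u,s) \<in> S \<or> (\<exists>w. {u,w} \<in> E \<and> lam {u,w} = s)"
  by (induction t arbitrary: u s) auto

lemma change_edge:
  assumes H1: "\<forall>x\<in>e. (x, v - 1) \<notin> infected_upto E lam 1 S T"
    and H2: "\<not>(\<exists>x y. e = {x,y} \<and> (x, lam e - 1) \<in> infected_upto E lam 1 S T \<and> (y, lam e) \<in> infected_upto E lam 1 S T)"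
  shows "t \<le> T \<Longrightarrow> infected_upto E (lam(e:=v)) 1 S t = infected_upto E lam 1 S t"
proof (induction t)
  case 0 then show ?case by simp
next
  case (Suc t)
  let ?I = "infected_upto E lam 1 S"
  have IH: "infected_upto E (lam(e:=v)) 1 S t = ?I t" using Suc.IH Suc.prems Suc_leD by blast
  have sub: "?I t \<subseteq> ?I T" "?I (Suc t) \<subseteq> ?I T"
    using Suc.prems Suc_leD iu_mono by blast+
  have key: "(\<exists>w s. (w, s) \<in> ?I t \<and> s < Suc t \<and> Suc t \<le> s + 1 \<and> {u, w} \<in> E \<and> (lam(e:=v)) {u, w} = Suc t)
     \<longleftrightarrow> (\<exists>w s. (w, s) \<in> ?I t \<and> s < Suc t \<and> Suc t \<le> s + 1 \<and> {u, w} \<in> E \<and> lam {u, w} = Suc t)"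
    if u: "u \<notin> fst ` ?I t" for u
  proof
    assume "\<exists>w s. (w, s) \<in> ?I t \<and> s < Suc t \<and> Suc t \<le> s + 1 \<and> {u, w} \<in> E \<and> (lam(e:=v)) {u, w} = Suc t"
    then obtain w s where ws: "(w, s) \<in> ?I t" "s < Suc t" "Suc t \<le> s + 1" "{u, w} \<in> E" "(lam(e:=v)) {u, w} = Suc t" by blast
    show "\<exists>w s. (w, s) \<in> ?I t \<and> s < Suc t \<and> Suc t \<le> s + 1 \<and> {u, w} \<in> E \<and> lam {u, w} = Suc t"
    proof (cases "{u,w} = e")
      case True
      then have "v = Suc t" "s = t" using ws by auto
      have "(w, t) \<in> ?I T" using ws(1) sub(1) \<open>s = t\<close> by blast
      then have "(w, v - 1) \<in> ?I T" using \<open>v = Suc t\<close> by simp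
      moreover have "w \<in> e" using True by auto
      ultimately show ?thesis using H1 by blast
    next
      case False then show ?thesis using ws by auto
    qed
  next
    assume "\<exists>w s. (w, s) \<in> ?I t \<and> s < Suc t \<and> Suc t \<le> s + 1 \<and> {u, w} \<in> E \<and> lam {u, w} = Suc t"
    then obtain w s where ws: "(w, s) \<in> ?I t" "s < Suc t" "Suc t \<le> s + 1" "{u, w} \<in> E" "lam {u, w} = Suc t" by blast
    show "\<exists>w s. (w, s) \<in> ?I t \<and> s < Suc t \<and> Suc t \<le> s + 1 \<and> {u, w} \<in> E \<and> (lam(e:=v)) {u, w} = Suc t"
    proof (cases "{u,w} = e")
      case True
      then have le: "lam e = Suc t" "s = t" using ws by auto
      have "(w, t) \<in> ?I T" using ws(1) sub(1) le(2) by blast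
      then have "(w, lam e - 1) \<in> ?I T" using le(1) by simp
      moreover have "(u, Suc t) \<in> ?I (Suc t)" using u ws by auto
      then have "(u, lam e) \<in> ?I T" using sub(2) le(1) by (auto simp del: infected_upto.simps)
      moreover have "e = {w,u}" using True by auto
      ultimately show ?thesis using H2 by blast
    next
      case False then show ?thesis using ws by auto
    qed
  qed
  show ?case
    by (simp only: infected_upto.simps IH) (use key in blast)
qed

lemma Max2[simp]: "Max {0::nat, j} = j" by simp

lemma Csub:
  fixes m :: nat and S :: "(nat \<times> nat) set"
  defines "TT \<equiv> infected_upto ((\<lambda>j. {0::nat,j}) ` {1..m}) Max 1 S m"
  defines "tm \<equiv> \<lambda>x. THE t. (x,t) \<in> TT"
  shows "{(j,v). j \<in> {1..m} \<and> v \<in> {1..m} \<and> v \<noteq> j \<and>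
            timetable ((\<lambda>j. {0::nat,j}) ` {1..m}) (Max({0,j}:=v)) 1 m S \<noteq> timetable ((\<lambda>j. {0::nat,j}) ` {1..m}) Max 1 m S}
      \<subseteq> (\<lambda>j. (j, Suc (tm j))) ` {1..m} \<union> (\<lambda>j. (j, Suc (tm 0))) ` {1..m} \<union> ({tm 0, Suc (tm 0)} \<times> {1..m})"
proof (rule subsetI)
  fix p assume "p \<in> {(j,v). j \<in> {1..m} \<and> v \<in> {1..m} \<and> v \<noteq> j \<and>
            timetable ((\<lambda>j. {0::nat,j}) ` {1..m}) (Max({0,j}:=v)) 1 m S \<noteq> timetable ((\<lambda>j. {0::nat,j}) ` {1..m}) Max 1 m S}"
  then obtain j v where p: "p = (j,v)" and j: "1 \<le> j" "j \<le> m" and v: "1 \<le> v" "v \<le> m" "v \<noteq> j"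
    and ne: "timetable ((\<lambda>j. {0::nat,j}) ` {1..m}) (Max({0,j}:=v)) 1 m S \<noteq> timetable ((\<lambda>j. {0::nat,j}) ` {1..m}) Max 1 m S"
    by auto
  have tmI: "tm x = t" if "(x,t) \<in> TT" for x t
    unfolding tm_def by (rule the_equality) (use that iu_uniq in \<open>auto simp: TT_def\<close>)
  have "\<not> ((\<forall>x\<in>{0,j}. (x, v - 1) \<notin> TT) \<and>
        \<not>(\<exists>x y. {0,j} = {x,y} \<and> (x, Max {0,j} - 1) \<in> TT \<and> (y, Max {0,j}) \<in> TT))"
    using change_edge[of "{0,j}" v "(\<lambda>j. {0::nat,j}) ` {1..m}" Max S m m] ne
    unfolding TT_def timetable_def by blast
  then consider (a) "(0, v - 1) \<in> TT" | (b) "(j, v - 1) \<in> TT"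
     | (c) x y where "{0,j} = {x,y}" "(x, j - 1) \<in> TT" "(y, j) \<in> TT" by auto
  then have "v = Suc (tm j) \<or> v = Suc (tm 0) \<or> j = tm 0 \<or> j = Suc (tm 0)"
  proof cases
    case a then have "tm 0 = v - 1" by (rule tmI)
    then show ?thesis using v by auto
  next
    case b then have "tm j = v - 1" by (rule tmI)
    then show ?thesis using v by auto
  next
    case c
    then have "(x = 0 \<and> y = j) \<or> (x = j \<and> y = 0)" using j by (auto simp: doubleton_eq_iff)
    then show ?thesis
    proof
      assume "x = 0 \<and> y = j"
      then have "tm 0 = j - 1" using c tmI by auto
      then show ?thesis using j by auto
    next
      assume "x = j \<and> y = 0"
      then have "tm 0 = j" using c tmI by auto
      then show ?thesis by auto
    qed
  qed
  then show "p \<in> (\<lambda>j. (j, Suc (tm j))) ` {1..m} \<union> (\<lambda>j. (j, Suc (tm 0))) ` {1..m} \<union> ({tm 0, Suc (tm 0)} \<times> {1..m})"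
    using p j v by auto
qed

lemma cardC:
  fixes m :: nat and S :: "(nat \<times> nat) set"
  shows "card {(j,v). j \<in> {1..m} \<and> v \<in> {1..m} \<and> v \<noteq> j \<and>
            timetable ((\<lambda>j. {0::nat,j}) ` {1..m}) (Max({0,j}:=v)) 1 m S \<noteq> timetable ((\<lambda>j. {0::nat,j}) ` {1..m}) Max 1 m S}
      \<le> 4 * m"
proof -
  define TT where "TT = infected_upto ((\<lambda>j. {0::nat,j}) ` {1..m}) Max 1 S m"
  define tm where "tm = (\<lambda>x. THE t. (x,t) \<in> TT)"
  let ?D = "(\<lambda>j. (j, Suc (tm j))) ` {1..m} \<union> (\<lambda>j. (j, Suc (tm 0))) ` {1..m} \<union> ({tm 0, Suc (tm 0)} \<times> {1..m})"
  have "card ?D \<le> card ((\<lambda>j. (j, Suc (tm j))) ` {1..m}) + card ((\<lambda>j. (j, Suc (tm 0))) ` {1..m}) + card ({tm 0, Suc (tm 0)} \<times> {1..m})"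
    using card_Un_le[of "(\<lambda>j. (j, Suc (tm j))) ` {1..m} \<union> (\<lambda>j. (j, Suc (tm 0))) ` {1..m}" "{tm 0, Suc (tm 0)} \<times> {1..m}"]
      card_Un_le[of "(\<lambda>j. (j, Suc (tm j))) ` {1..m}" "(\<lambda>j. (j, Suc (tm 0))) ` {1..m}"] by linarith
  also have "\<dots> \<le> m + m + 2 * m"
  proof -
    have "card ((\<lambda>j. (j, Suc (tm j))) ` {1..m}) \<le> m" using card_image_le[of "{1..m}" "\<lambda>j. (j, Suc (tm j))"] by simp
    moreover have "card ((\<lambda>j. (j, Suc (tm 0))) ` {1..m}) \<le> m" using card_image_le[of "{1..m}" "\<lambda>j. (j, Suc (tm 0))"] by simp
    moreover have "card ({tm 0, Suc (tm 0)} \<times> {1..m}) \<le> 2 * m" by (simp add: card_cartesian_product)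
    ultimately show ?thesis by linarith
  qed
  finally have "card ?D \<le> 4 * m" by simp
  moreover have "finite ?D" by simp
  moreover have "{(j,v). j \<in> {1..m} \<and> v \<in> {1..m} \<and> v \<noteq> j \<and>
            timetable ((\<lambda>j. {0::nat,j}) ` {1..m}) (Max({0,j}:=v)) 1 m S \<noteq> timetable ((\<lambda>j. {0::nat,j}) ` {1..m}) Max 1 m S}
      \<subseteq> ?D" unfolding tm_def TT_def by (rule Csub)
  ultimately show ?thesis using card_mono[of ?D] by (meson order_trans)
qed

lemma lower:
  assumes W: "witnessing_schedule {0..m} ((\<lambda>j. {0::nat,j}) ` {1..m}) m 1 k Max Ss"
  shows "m - 1 \<le> 4 * length Ss"
proof -
  let ?E = "(\<lambda>j. {0::nat,j}) ` {1..m}"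
  define C where "C = (\<lambda>S. {(j,v). j \<in> {1..m} \<and> v \<in> {1..m} \<and> v \<noteq> j \<and>
            timetable ?E (Max({0,j}:=v)) 1 m S \<noteq> timetable ?E Max 1 m S})"
  define P where "P = {(j,v). j \<in> {1..m} \<and> v \<in> {1..m} \<and> (v::nat) \<noteq> j}"
  have PC: "P \<subseteq> (\<Union>S\<in>set Ss. C S)"
  proof
    fix p assume "p \<in> P"
    then obtain j v where p: "p = (j,v)" and j: "1 \<le> j" "j \<le> m" and v: "1 \<le> v" "v \<le> m" "v \<noteq> j"
      unfolding P_def by auto
    have lab: "labeling ?E m (Max({0,j}:=v))"
      unfolding labeling_def
    proof
      fix e assume "e \<in> ?E"
      then obtain j' where j': "j' \<in> {1..m}" "e = {0,j'}" by blast
      show "(Max({0,j}:=v)) e \<in> {1..m}"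
      proof (cases "e = {0,j}")
        case True then show ?thesis using v by simp
      next
        case False then show ?thesis using j' by simp
      qed
    qed
    have "\<exists>S\<in>set Ss. timetable ?E (Max({0,j}:=v)) 1 m S \<noteq> timetable ?E Max 1 m S"
    proof (rule ccontr)
      assume "\<not> ?thesis"
      then have all: "\<forall>S\<in>set Ss. timetable ?E (Max({0,j}:=v)) 1 m S = timetable ?E Max 1 m S" by blast
      have Wd: "\<forall>lam'. labeling ?E m lam' \<longrightarrow>
        (\<forall>S\<in>set Ss. timetable ?E lam' 1 m S = timetable ?E Max 1 m S) \<longrightarrow>
        (\<forall>e\<in>?E. lam' e = Max e)" using W unfolding witnessing_schedule_def by (rule conjunct2)
      have "\<forall>e\<in>?E. (Max({0,j}:=v)) e = Max e" using Wd lab all by blast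
      moreover have "{0,j} \<in> ?E" using j by auto
      ultimately have "(Max({0,j}:=v)) {0,j} = Max {0,j}" by (rule bspec)
      then show False using v by simp
    qed
    then obtain S where "S \<in> set Ss" "timetable ?E (Max({0,j}:=v)) 1 m S \<noteq> timetable ?E Max 1 m S" by blast
    then have "(j,v) \<in> C S" using j v unfolding C_def by simp
    then show "p \<in> (\<Union>S\<in>set Ss. C S)" using p \<open>S \<in> set Ss\<close> by blast
  qed
  have fin: "finite (C S)" for S unfolding C_def
    by (rule finite_subset[of _ "{1..m} \<times> {1..m}"]) auto
  have "card P = m * m - m"
  proof -
    have "P = ({1..m} \<times> {1..m}) - (\<lambda>j. (j,j)) ` {1..m}" unfolding P_def by auto
    moreover have "card ((\<lambda>j. (j,j)) ` {1..m}) = m" by (subst card_image) (auto simp: inj_on_def)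
    ultimately show ?thesis by (simp add: card_Diff_subset card_cartesian_product image_subset_iff)
  qed
  moreover have "card P \<le> card (\<Union>S\<in>set Ss. C S)"
    using PC fin by (intro card_mono) auto
  moreover have "card (\<Union>S\<in>set Ss. C S) \<le> (\<Sum>S\<in>set Ss. card (C S))" by (rule card_UN_le) simp
  moreover have "(\<Sum>S\<in>set Ss. card (C S)) \<le> card (set Ss) * (4 * m)"
  proof -
    have "card (C S) \<le> 4 * m" for S unfolding C_def by (rule cardC)
    then show ?thesis using sum_bounded_above[of "set Ss" "\<lambda>S. card (C S)" "4*m"] by simp
  qed
  moreover have "card (set Ss) \<le> length Ss" by (rule card_length)
  ultimately have "m * m - m \<le> length Ss * (4 * m)"
    using mult_le_mono1[of "card (set Ss)" "length Ss" "4*m"] by linarith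
  then have "m * (m - 1) \<le> m * (4 * length Ss)" by (simp add: algebra_simps right_diff_distrib')
  then show ?thesis by (cases "m = 0") auto
qed


lemma run_empty: "t < r \<Longrightarrow> infected_upto E lam d {(0::nat,r)} t = {}"
  by (induction t) auto

lemma run_r: "infected_upto E lam d {(0::nat,r)} r = {(0,r)}"
proof (cases r)
  case 0 then show ?thesis by simp
next
  case (Suc t)
  then have "infected_upto E lam d {(0::nat,r)} t = {}" using run_empty by simp
  then show ?thesis using Suc by simp
qed

lemma run_leaf:
  assumes "Suc r \<le> m"
  shows "(Suc r, Suc r) \<in> infected_upto ((\<lambda>j. {0::nat,j}) ` {1..m}) Max 1 {(0,r)} m"
proof -
  have "{Suc r, 0} \<in> (\<lambda>j. {0::nat,j}) ` {1..m}" using assms by (auto simp: insert_commute)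
  moreover have "Max {Suc r, 0} = Suc r" by simp
  ultimately have "(Suc r, Suc r) \<in> infected_upto ((\<lambda>j. {0::nat,j}) ` {1..m}) Max 1 {(0,r)} (Suc r)"
    using run_r[of "(\<lambda>j. {0::nat,j}) ` {1..m}" Max 1 r] by auto
  then show ?thesis using iu_mono[OF assms] by blast
qed

lemma witness:
  assumes "k \<ge> 1"
  shows "witnessing_schedule {0..m} ((\<lambda>j. {0::nat,j}) ` {1..m}) m 1 k Max (map (\<lambda>r. {(0::nat, r)}) [0..<m])"
  unfolding witnessing_schedule_def
proof (intro conjI allI impI ballI)
  fix S assume "S \<in> set (map (\<lambda>r. {(0::nat, r)}) [0..<m])"
  then obtain r where "r < m" "S = {(0,r)}" by auto
  then show "valid_seeds {0..m} m k S" unfolding valid_seeds_def using assms by auto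
next
  fix lam' e
  assume lab: "labeling ((\<lambda>j. {0::nat,j}) ` {1..m}) m lam'"
    and eq: "\<forall>S\<in>set (map (\<lambda>r. {(0::nat, r)}) [0..<m]).
              timetable ((\<lambda>j. {0::nat,j}) ` {1..m}) lam' 1 m S = timetable ((\<lambda>j. {0::nat,j}) ` {1..m}) Max 1 m S"
    and e: "e \<in> (\<lambda>j. {0::nat,j}) ` {1..m}"
  then obtain j where j: "1 \<le> j" "j \<le> m" "e = {0,j}" by auto
  define r where "r = j - 1"
  have jr: "j = Suc r" using j r_def by simp
  have "{(0::nat, r)} \<in> set (map (\<lambda>r. {(0::nat, r)}) [0..<m])" using j r_def by auto
  then have "timetable ((\<lambda>j. {0::nat,j}) ` {1..m}) lam' 1 m {(0,r)} = timetable ((\<lambda>j. {0::nat,j}) ` {1..m}) Max 1 m {(0,r)}"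
    using eq by blast
  then have "(j, j) \<in> infected_upto ((\<lambda>j. {0::nat,j}) ` {1..m}) lam' 1 {(0,r)} m"
    using run_leaf[of r m] j jr unfolding timetable_def by simp
  from iu_origin[OF this] obtain w where w: "{j,w} \<in> (\<lambda>j. {0::nat,j}) ` {1..m}" "lam' {j,w} = j"
    using j by auto
  then have "w = 0" using j by (auto simp: doubleton_eq_iff)
  then have "lam' e = j" using w j by (simp add: insert_commute)
  then show "lam' e = Max e" using j by simp
qed


lemma cardE: "card ((\<lambda>j. {0::nat,j}) ` {1..m}) = m"
  by (subst card_image) (auto simp: inj_on_def doubleton_eq_iff)

theorem mainTheorem18:
  "\<exists>(V :: nat \<Rightarrow> nat set) (E :: nat \<Rightarrow> nat set set) (Tmax :: nat \<Rightarrow> nat) (\<delta> :: nat \<Rightarrow> nat)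
      (lam :: nat \<Rightarrow> nat set \<Rightarrow> nat).
     (\<forall>n. temporal_graph (V n) (E n) (Tmax n) (lam n)) \<and>
     strict_mono (\<lambda>n. card (E n)) \<and>
     (\<exists>c :: real. c > 0 \<and> (\<forall>k :: nat. k \<ge> 1 \<longrightarrow> (\<exists>N. \<forall>n \<ge> N.
        (\<exists>Ss. witnessing_schedule (V n) (E n) (Tmax n) (\<delta> n) k (lam n) Ss) \<and>
        real (witness_complexity (V n) (E n) (Tmax n) (\<delta> n) k (lam n)) \<ge> c * real (card (E n)))))"
proof (intro exI conjI)
  let ?V = "\<lambda>n. {0..Suc n}" and ?E = "\<lambda>n. (\<lambda>j. {0::nat,j}) ` {1..Suc n}"
  show "\<forall>n. temporal_graph (?V n) (?E n) (Suc n) (\<lambda>e. Max e)"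
    unfolding temporal_graph_def by force
  show "strict_mono (\<lambda>n. card (?E n))"
  proof (rule strict_monoI)
    fix x y :: nat assume "x < y"
    then show "card (?E x) < card (?E y)" unfolding cardE by simp
  qed
  show "(1/8::real) > 0" by simp
  show "\<forall>k :: nat. k \<ge> 1 \<longrightarrow> (\<exists>N. \<forall>n \<ge> N.
        (\<exists>Ss. witnessing_schedule (?V n) (?E n) (Suc n) 1 k (\<lambda>e. Max e) Ss) \<and>
        real (witness_complexity (?V n) (?E n) (Suc n) 1 k (\<lambda>e. Max e)) \<ge> 1/8 * real (card (?E n)))"
  proof (intro allI impI exI[of _ 1])
    fix k n :: nat assume k: "k \<ge> 1" and n: "n \<ge> 1"
    have ex: "\<exists>Ss. witnessing_schedule (?V n) (?E n) (Suc n) 1 k Max Ss"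
      using witness[OF k, of "Suc n"] by blast
    then have ex2: "\<exists>a Ss. length Ss = a \<and> witnessing_schedule (?V n) (?E n) (Suc n) 1 k Max Ss" by blast
    define a where "a = witness_complexity (?V n) (?E n) (Suc n) 1 k Max"
    have "\<exists>Ss. length Ss = a \<and> witnessing_schedule (?V n) (?E n) (Suc n) 1 k Max Ss"
      unfolding a_def witness_complexity_def by (rule LeastI_ex[OF ex2])
    then obtain Ss where "length Ss = a" "witnessing_schedule (?V n) (?E n) (Suc n) 1 k Max Ss" by blast
    then have "n \<le> 4 * a" using lower[of "Suc n" k Ss] by simp
    then have "real n \<le> 4 * real a" by linarith
    then have "1/8 * real (card (?E n)) \<le> real a" using n unfolding cardE by simp
    then show "(\<exists>Ss. witnessing_schedule (?V n) (?E n) (Suc n) 1 k (\<lambda>e. Max e) Ss) \<and>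
        real (witness_complexity (?V n) (?E n) (Suc n) 1 k (\<lambda>e. Max e)) \<ge> 1/8 * real (card (?E n))"
      using ex a_def by simp
  qed
qed

end
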